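(* Let $A\subset\mathbb{R}$ be a finite convex set and $B\subset\mathbb{R}$ any finite set. For $r\geq1$ let $X_r=\{x\in A+B:\ r\leq r_{A+B}(x)<2r\}$. Then \[ |X_r|\ll \frac{|A||B|^2}{r^3}. \]
   Context: A finite set $A=\{a_1<\dots<a_N\}\subset\mathbb{R}$ is convex if the gaps $a_{i+1}-a_i$ form a strictly monotone sequence. $r_{A+B}(x)$ is the number of pairs $(a,b)\in A\times B$ with $a+b=x$. *)

theory Defs
  imports Complex_Main
begin

definition convex_set :: "real set \<Rightarrow> bool" where
  "convex_set A \<longleftrightarrow> finite A \<and>
     (let a = sorted_list_of_set A; N = length a in
        (\<forall>i j. i < j \<and> j + 1 < N \<longrightarrow> a!(i+1) - a!i < a!(j+1) - a!j) \<or>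
        (\<forall>i j. i < j \<and> j + 1 < N \<longrightarrow> a!(i+1) - a!i > a!(j+1) - a!j))"

definition sumset :: "real set \<Rightarrow> real set \<Rightarrow> real set" where
  "sumset A B = {a + b | a b. a \<in> A \<and> b \<in> B}"

definition rep :: "real set \<Rightarrow> real set \<Rightarrow> real \<Rightarrow> nat" where
  "rep A B x = card {(a, b). a \<in> A \<and> b \<in> B \<and> a + b = x}"

definition Xr :: "real set \<Rightarrow> real set \<Rightarrow> real \<Rightarrow> real set" where
  "Xr A B r = {x \<in> sumset A B. r \<le> real (rep A B x) \<and> real (rep A B x) < 2 * r}"

end

theory Submission
  imports Defs
begin

definition rk :: "real set \<Rightarrow> real \<Rightarrow> nat" where
  "rk S y = card {z\<in>S. z < y}"

lemma rk_mono: "finite S \<Longrightarrow> y \<in> S \<Longrightarrow> y < y' \<Longrightarrow> rk S y < rk S y'"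
  unfolding rk_def
  by (rule psubset_card_mono) auto

lemma rk_le: "finite S \<Longrightarrow> y \<le> y' \<Longrightarrow> rk S y \<le> rk S y'"
  unfolding rk_def by (rule card_mono) auto

lemma rk_less_card: "finite S \<Longrightarrow> y \<in> S \<Longrightarrow> rk S y < card S"
  unfolding rk_def by (rule psubset_card_mono) auto

lemma rk_inj: "finite S \<Longrightarrow> y \<in> S \<Longrightarrow> y' \<in> S \<Longrightarrow> rk S y = rk S y' \<Longrightarrow> y = y'"
  by (metis less_irrefl linorder_neqE rk_mono)

lemma rk_nth:
  assumes "finite S" "i < card S"
  shows "rk S (sorted_list_of_set S ! i) = i"
proof -
  let ?L = "sorted_list_of_set S"
  have sw: "sorted_wrt (<) ?L" by simp
  have len: "length ?L = card S" by simp
  have "{z\<in>S. z < ?L ! i} = (\<lambda>q. ?L ! q) ` {..<i}"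
  proof
    show "{z\<in>S. z < ?L ! i} \<subseteq> (\<lambda>q. ?L ! q) ` {..<i}"
    proof
      fix z assume z: "z \<in> {z\<in>S. z < ?L ! i}"
      then have "z \<in> set ?L" using assms by simp
      then obtain q where q: "q < length ?L" "z = ?L ! q" by (metis in_set_conv_nth)
      have "q < i"
      proof (rule ccontr)
        assume "\<not> q < i"
        then have "i \<le> q" by simp
        then have "?L ! i \<le> ?L ! q"
          using sw q len assms by (metis order.order_iff_strict sorted_wrt_nth_less)
        then show False using z q by simp
      qed
      then show "z \<in> (\<lambda>q. ?L ! q) ` {..<i}" using q by auto
    qed
  next
    show "(\<lambda>q. ?L ! q) ` {..<i} \<subseteq> {z\<in>S. z < ?L ! i}"
    proof
      fix z assume "z \<in> (\<lambda>q. ?L ! q) ` {..<i}"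
      then obtain q where q: "q < i" "z = ?L ! q" by auto
      have "z \<in> set ?L" using q len assms by (metis nth_mem order.strict_trans)
      then have "z \<in> S" using assms by simp
      moreover have "z < ?L ! i" using sw q len assms sorted_wrt_nth_less by fastforce
      ultimately show "z \<in> {z\<in>S. z < ?L ! i}" by simp
    qed
  qed
  moreover have "inj_on (\<lambda>q. ?L ! q) {..<i}"
    using distinct_sorted_list_of_set[of S] len assms
    by (auto simp: inj_on_def nth_eq_iff_index_eq)
  ultimately show ?thesis unfolding rk_def by (simp add: card_image)
qed

lemma nth_rk:
  assumes "finite S" "y \<in> S"
  shows "sorted_list_of_set S ! rk S y = y"
proof -
  have "y \<in> set (sorted_list_of_set S)" using assms by simp
  then obtain q where q: "q < card S" "y = sorted_list_of_set S ! q"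
    by (metis in_set_conv_nth length_sorted_list_of_set)
  then show ?thesis using rk_nth[OF assms(1) q(1)] by simp
qed

lemma gaps_tele_inc:
  fixes L :: "real list"
  assumes g: "\<forall>i j. i < j \<and> j + 1 < length L \<longrightarrow> L!(i+1) - L!i < L!(j+1) - L!j"
  assumes "i < j"
  shows "j + s + 1 < length L \<Longrightarrow> L!(i+s+1) - L!i < L!(j+s+1) - L!j"
proof (induction s)
  case 0 then show ?case using g assms(2) by simp
next
  case (Suc s)
  then have ih: "L!(i+s+1) - L!i < L!(j+s+1) - L!j" by simp
  have "L!(i+s+1+1) - L!(i+s+1) < L!(j+s+1+1) - L!(j+s+1)"
    using g assms(2) Suc.prems by simp
  then show ?case using ih by simp
qed

lemma gaps_tele_dec:
  fixes L :: "real list"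
  assumes g: "\<forall>i j. i < j \<and> j + 1 < length L \<longrightarrow> L!(i+1) - L!i > L!(j+1) - L!j"
  assumes "i < j"
  shows "j + s + 1 < length L \<Longrightarrow> L!(i+s+1) - L!i > L!(j+s+1) - L!j"
proof (induction s)
  case 0 then show ?case using g assms(2) by simp
next
  case (Suc s)
  then have ih: "L!(i+s+1) - L!i > L!(j+s+1) - L!j" by simp
  have "L!(i+s+1+1) - L!(i+s+1) > L!(j+s+1+1) - L!(j+s+1)"
    using g assms(2) Suc.prems by simp
  then show ?case using ih by simp
qed

lemma convex_key_lt:
  assumes cA: "convex_set A"
    and i: "i < j" and s: "s \<ge> 1" and js: "j + s < card A"
  shows "sorted_list_of_set A ! (i+s) - sorted_list_of_set A ! i \<noteq>
         sorted_list_of_set A ! (j+s) - sorted_list_of_set A ! j"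
proof -
  let ?L = "sorted_list_of_set A"
  have fin: "finite A" using cA unfolding convex_set_def by simp
  have len: "length ?L = card A" by simp
  obtain s' where s': "s = s' + 1" using s by (metis add.commute le_Suc_ex plus_1_eq_Suc)
  have js': "j + s' + 1 < length ?L" using js s' len by simp
  from cA fin have
    "(\<forall>i j. i < j \<and> j + 1 < length ?L \<longrightarrow> ?L!(i+1) - ?L!i < ?L!(j+1) - ?L!j) \<or>
     (\<forall>i j. i < j \<and> j + 1 < length ?L \<longrightarrow> ?L!(i+1) - ?L!i > ?L!(j+1) - ?L!j)"
    unfolding convex_set_def Let_def by simp
  then show ?thesis
  proof
    assume g: "\<forall>i j. i < j \<and> j + 1 < length ?L \<longrightarrow> ?L!(i+1) - ?L!i < ?L!(j+1) - ?L!j"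
    show ?thesis using gaps_tele_inc[OF g i js'] s' by (simp add: add.assoc)
  next
    assume g: "\<forall>i j. i < j \<and> j + 1 < length ?L \<longrightarrow> ?L!(i+1) - ?L!i > ?L!(j+1) - ?L!j"
    show ?thesis using gaps_tele_dec[OF g i js'] s' by (simp add: add.assoc)
  qed
qed

lemma convex_key:
  assumes cA: "convex_set A"
    and a1: "a1 \<in> A" "a1 + d \<in> A" and a2: "a2 \<in> A" "a2 + d \<in> A" and d: "d > 0"
    and eq: "rk A (a1 + d) - rk A a1 = rk A (a2 + d) - rk A a2"
  shows "a1 = a2"
proof -
  have fin: "finite A" using cA unfolding convex_set_def by simp
  define i where "i = rk A a1"
  define j where "j = rk A a2"
  define s where "s = rk A (a1 + d) - rk A a1"
  have r1: "rk A (a1+d) = i + s" using rk_mono[OF fin a1(1), of "a1+d"] d unfolding i_def s_def by simp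
  have r2: "rk A (a2+d) = j + s" using rk_mono[OF fin a2(1), of "a2+d"] d eq unfolding j_def s_def by simp
  have s1: "s \<ge> 1" using rk_mono[OF fin a1(1), of "a1+d"] d unfolding s_def by simp
  let ?L = "sorted_list_of_set A"
  have e1: "?L ! i = a1" "?L ! (i+s) = a1 + d"
    using nth_rk[OF fin a1(1)] nth_rk[OF fin a1(2)] r1 unfolding i_def by auto
  have e2: "?L ! j = a2" "?L ! (j+s) = a2 + d"
    using nth_rk[OF fin a2(1)] nth_rk[OF fin a2(2)] r2 unfolding j_def by auto
  have b1: "i + s < card A" using rk_less_card[OF fin a1(2)] r1 by simp
  have b2: "j + s < card A" using rk_less_card[OF fin a2(2)] r2 by simp
  show ?thesis
  proof (cases i j rule: linorder_cases)
    case less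
    then show ?thesis using convex_key_lt[OF cA less s1 b2] e1 e2 by simp
  next
    case equal
    then show ?thesis using e1 e2 by simp
  next
    case greater
    then show ?thesis using convex_key_lt[OF cA greater s1 b1] e1 e2 by simp
  qed
qed


definition RR :: "real set \<Rightarrow> real set \<Rightarrow> real \<Rightarrow> real set" where
  "RR A B x = {a\<in>A. x - a \<in> B}"

definition nx :: "real set \<Rightarrow> real set \<Rightarrow> real \<Rightarrow> real \<Rightarrow> real" where
  "nx A B x a = Min {a'\<in>RR A B x. a < a'}"

definition R1 :: "real set \<Rightarrow> real set \<Rightarrow> real \<Rightarrow> real set" where
  "R1 A B x = RR A B x - {Max (RR A B x)}"

definition sA :: "real set \<Rightarrow> real set \<Rightarrow> real \<Rightarrow> real \<Rightarrow> nat" where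
  "sA A B x a = rk A (nx A B x a) - rk A a"

definition uB :: "real set \<Rightarrow> real set \<Rightarrow> real \<Rightarrow> real \<Rightarrow> nat" where
  "uB A B x a = rk B (x - a) - rk B (x - nx A B x a)"

lemma RR_fin: "finite A \<Longrightarrow> finite (RR A B x)"
  unfolding RR_def by simp

lemma nx_props:
  assumes fin: "finite A" and a: "a \<in> R1 A B x"
  shows "nx A B x a \<in> RR A B x" "a < nx A B x a"
        "\<And>a'. a' \<in> RR A B x \<Longrightarrow> a < a' \<Longrightarrow> nx A B x a \<le> a'"
proof -
  have aR: "a \<in> RR A B x" and aM: "a \<noteq> Max (RR A B x)" using a unfolding R1_def by auto
  have fR: "finite (RR A B x)" using RR_fin[OF fin] .
  have "a \<le> Max (RR A B x)" using aR fR by simp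
  then have "a < Max (RR A B x)" using aM by simp
  moreover have "Max (RR A B x) \<in> RR A B x" using aR fR by (intro Max_in) auto
  ultimately have ne: "{a'\<in>RR A B x. a < a'} \<noteq> {}" by blast
  have fS: "finite {a'\<in>RR A B x. a < a'}" using fR by simp
  have "Min {a'\<in>RR A B x. a < a'} \<in> {a'\<in>RR A B x. a < a'}" using Min_in[OF fS ne] .
  then show "nx A B x a \<in> RR A B x" "a < nx A B x a" unfolding nx_def by auto
  fix a' assume "a' \<in> RR A B x" "a < a'"
  then show "nx A B x a \<le> a'" unfolding nx_def using fS by (intro Min_le) auto
qed

lemma nat_intervals_sum:
  fixes p q :: "real \<Rightarrow> nat"
  assumes fI: "finite I"
    and sub: "\<And>a. a \<in> I \<Longrightarrow> q a \<le> n"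
    and disj: "\<And>a a'. a \<in> I \<Longrightarrow> a' \<in> I \<Longrightarrow> a < a' \<Longrightarrow> q a' \<le> p a \<or> q a \<le> p a'"
  shows "(\<Sum>a\<in>I. q a - p a) \<le> n"
proof -
  have "(\<Sum>a\<in>I. q a - p a) = (\<Sum>a\<in>I. card {p a..<q a})" by simp
  also have "\<dots> = card (\<Union>a\<in>I. {p a..<q a})"
  proof (rule card_UN_disjoint[symmetric])
    show "finite I" by fact
    show "\<forall>i\<in>I. finite {p i..<q i}" by simp
    show "\<forall>i\<in>I. \<forall>j\<in>I. i \<noteq> j \<longrightarrow> {p i..<q i} \<inter> {p j..<q j} = {}"
    proof (intro ballI impI)
      fix i j assume ij: "i \<in> I" "j \<in> I" "i \<noteq> j"
      then have "i < j \<or> j < i" by auto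
      then show "{p i..<q i} \<inter> {p j..<q j} = {}"
        using disj[of i j] disj[of j i] ij by auto
    qed
  qed
  also have "\<dots> \<le> card {..<n}"
    using sub by (intro card_mono) (auto intro: less_le_trans)
  finally show ?thesis by simp
qed

lemma sumA_le:
  assumes fA: "finite A"
  shows "(\<Sum>a\<in>R1 A B x. sA A B x a) \<le> card A"
  unfolding sA_def
proof (rule nat_intervals_sum[where p = "\<lambda>a. rk A a" and q = "\<lambda>a. rk A (nx A B x a)"])
  show "finite (R1 A B x)" using RR_fin[OF fA] unfolding R1_def by simp
  fix a assume a: "a \<in> R1 A B x"
  have h: "nx A B x a \<in> A" using nx_props(1)[OF fA a] unfolding RR_def by simp
  show "rk A (nx A B x a) \<le> card A" using h rk_less_card[OF fA] by (simp add: less_imp_le)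
next
  fix a a' assume a: "a \<in> R1 A B x" and a': "a' \<in> R1 A B x" and lt: "a < a'"
  have "a' \<in> RR A B x" using a' unfolding R1_def by simp
  then have "nx A B x a \<le> a'" using nx_props(3)[OF fA a] lt by simp
  then have h: "rk A (nx A B x a) \<le> rk A a'" using rk_le[OF fA] by simp
  show "rk A (nx A B x a') \<le> rk A a \<or> rk A (nx A B x a) \<le> rk A a'" using h by simp
qed

lemma sumB_le:
  assumes fA: "finite A" and fB: "finite B"
  shows "(\<Sum>a\<in>R1 A B x. uB A B x a) \<le> card B"
  unfolding uB_def
proof (rule nat_intervals_sum[where q = "\<lambda>a. rk B (x - a)" and p = "\<lambda>a. rk B (x - nx A B x a)"])
  show "finite (R1 A B x)" using RR_fin[OF fA] unfolding R1_def by simp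
  fix a assume a: "a \<in> R1 A B x"
  have h: "x - a \<in> B" using a unfolding R1_def RR_def by simp
  show "rk B (x - a) \<le> card B" using h rk_less_card[OF fB] by (simp add: less_imp_le)
next
  fix a a' assume a: "a \<in> R1 A B x" and a': "a' \<in> R1 A B x" and lt: "a < a'"
  have "a' \<in> RR A B x" using a' unfolding R1_def by simp
  then have "nx A B x a \<le> a'" using nx_props(3)[OF fA a] lt by simp
  then have h: "rk B (x - a') \<le> rk B (x - nx A B x a)" using rk_le[OF fB] by simp
  show "rk B (x - a') \<le> rk B (x - nx A B x a) \<or> rk B (x - a) \<le> rk B (x - nx A B x a')"
    using h by simp
qed

lemma bad_count:
  fixes f :: "real \<Rightarrow> nat"
  assumes fI: "finite I" and s: "(\<Sum>a\<in>I. f a) \<le> n" and sg: "\<sigma> > 0"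
  shows "real (card {a\<in>I. \<sigma> < real (f a)}) \<le> real n / \<sigma>"
proof -
  let ?J = "{a\<in>I. \<sigma> < real (f a)}"
  have "real (card ?J) * \<sigma> = (\<Sum>a\<in>?J. \<sigma>)" by simp
  also have "\<dots> \<le> (\<Sum>a\<in>?J. real (f a))" by (rule sum_mono) auto
  also have "\<dots> \<le> (\<Sum>a\<in>I. real (f a))" by (rule sum_mono2) (use fI in auto)
  also have "\<dots> \<le> real n" using s by (metis of_nat_le_iff of_nat_sum)
  finally show ?thesis using sg by (simp add: field_simps)
qed

lemma rep_eq:
  assumes "finite A" "finite B"
  shows "rep A B x = card (RR A B x)"
proof -
  have "{(a, b). a \<in> A \<and> b \<in> B \<and> a + b = x} = (\<lambda>a. (a, x - a)) ` RR A B x"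
    unfolding RR_def by (auto simp: image_iff)
  moreover have "inj_on (\<lambda>a. (a, x - a)) (RR A B x)" by (auto simp: inj_on_def)
  ultimately show ?thesis unfolding rep_def by (simp add: card_image)
qed

lemma inj_key:
  assumes cA: "convex_set A" and fB: "finite B"
    and a1: "a1 \<in> R1 A B x1" and a2: "a2 \<in> R1 A B x2"
    and e: "x1 - a1 = x2 - a2" "uB A B x1 a1 = uB A B x2 a2" "sA A B x1 a1 = sA A B x2 a2"
  shows "x1 = x2 \<and> a1 = a2"
proof -
  have fA: "finite A" using cA unfolding convex_set_def by simp
  define b where "b = x1 - a1"
  define c1 where "c1 = nx A B x1 a1"
  define c2 where "c2 = nx A B x2 a2"
  have c1R: "c1 \<in> A" "x1 - c1 \<in> B" "a1 < c1" using nx_props[OF fA a1] unfolding c1_def RR_def by auto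
  have c2R: "c2 \<in> A" "x2 - c2 \<in> B" "a2 < c2" using nx_props[OF fA a2] unfolding c2_def RR_def by auto
  have bB: "b \<in> B" "a1 \<in> A" "a2 \<in> A" using a1 a2 unfolding b_def R1_def RR_def by auto
  have lt1: "rk B (x1 - c1) < rk B b" using rk_mono[OF fB c1R(2), of b] c1R unfolding b_def by simp
  have lt2: "rk B (x2 - c2) < rk B b" using rk_mono[OF fB c2R(2), of b] c2R e(1) unfolding b_def by simp
  have "rk B b - rk B (x1 - c1) = rk B b - rk B (x2 - c2)"
    using e(2) e(1) unfolding uB_def b_def c1_def c2_def by simp
  then have "rk B (x1 - c1) = rk B (x2 - c2)" using lt1 lt2 by simp
  then have bb: "x1 - c1 = x2 - c2" using rk_inj[OF fB c1R(2) c2R(2)] by simp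
  define d where "d = c1 - a1"
  have d2: "c2 = a2 + d" using bb e(1) unfolding d_def by simp
  have d1: "c1 = a1 + d" unfolding d_def by simp
  have dpos: "d > 0" using c1R unfolding d_def by simp
  have "rk A (a1 + d) - rk A a1 = rk A (a2 + d) - rk A a2"
    using e(3) d1 d2 unfolding sA_def c1_def c2_def by simp
  then have "a1 = a2" using convex_key[OF cA bB(2) _ bB(3) _ dpos] c1R c2R d1 d2 by simp
  then show ?thesis using e(1) by simp
qed


lemma sumset_img: "sumset A B = (\<lambda>(a,b). a + b) ` (A \<times> B)"
  unfolding sumset_def by auto

lemma sumset_card: "finite A \<Longrightarrow> finite B \<Longrightarrow> card (sumset A B) \<le> card A * card B"
proof -
  assume f: "finite A" "finite B"
  have "card (sumset A B) \<le> card (A \<times> B)" unfolding sumset_img by (rule card_image_le) (use f in simp)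
  then show ?thesis by (simp add: card_cartesian_product)
qed

lemma sA_pos: "finite A \<Longrightarrow> a \<in> R1 A B x \<Longrightarrow> sA A B x a \<ge> 1"
  using rk_mono[of A a "nx A B x a"] nx_props[of A a B x] unfolding sA_def R1_def RR_def by auto

lemma uB_pos: "finite A \<Longrightarrow> finite B \<Longrightarrow> a \<in> R1 A B x \<Longrightarrow> uB A B x a \<ge> 1"
  using rk_mono[of B "x - nx A B x a" "x - a"] nx_props[of A a B x] unfolding uB_def RR_def by auto

lemma main_bound:
  assumes cA: "convex_set A" and fB: "finite B" and r: "r \<ge> 1"
  shows "real (card (Xr A B r)) \<le> 64 * real (card A) * real (card B) ^ 2 / r ^ 3"
proof -
  have fA: "finite A" using cA unfolding convex_set_def by simp
  define n where "n = card A"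
  define m where "m = card B"
  define X where "X = Xr A B r"
  have XS: "X \<subseteq> sumset A B" unfolding X_def Xr_def by auto
  have fS: "finite (sumset A B)" unfolding sumset_img using fA fB by simp
  have fX: "finite X" using XS fS finite_subset by blast
  have r3: "r ^ 3 > 0" using r by simp
  show ?thesis
  proof (cases "X = {}")
    case True
    then show ?thesis unfolding X_def[symmetric] using r3 by simp
  next
    case False
    then obtain x0 where "x0 \<in> sumset A B" using XS by blast
    then obtain a0 b0 where "a0 \<in> A" "b0 \<in> B" unfolding sumset_def by auto
    then have n1: "n \<ge> 1" and m1: "m \<ge> 1" unfolding n_def m_def using fA fB
      by (auto simp: Suc_le_eq card_gt_0_iff)
    have cX: "real (card X) \<le> real n * real m"
      using card_mono[OF fS XS] sumset_card[OF fA fB] unfolding n_def m_def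
      by (metis of_nat_le_iff of_nat_mult order_trans)
    show ?thesis
    proof (cases "r < 4")
      case True
      have "r ^ 3 \<le> 4 ^ 3" using True r by (intro power_mono) auto
      then have "r ^ 3 \<le> 64 * real m" using m1 by simp
      then have "real n * real m * r ^ 3 \<le> real n * real m * (64 * real m)"
        by (intro mult_left_mono) auto
      moreover have "real (card X) * r ^ 3 \<le> real n * real m * r ^ 3"
        using cX r3 by (intro mult_right_mono) auto
      ultimately have "real (card X) * r ^ 3 \<le> 64 * real n * real m ^ 2"
        by (simp add: power2_eq_square algebra_simps)
      then show ?thesis unfolding X_def[symmetric] n_def[symmetric] m_def[symmetric]
        using r3 by (simp add: field_simps)
    next
      case False
      then have r4: "r \<ge> 4" by simp
      define \<sigma> where "\<sigma> = 4 * real n / r"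
      define \<tau> where "\<tau> = 4 * real m / r"
      have sp: "\<sigma> > 0" using n1 r unfolding \<sigma>_def by simp
      have tp: "\<tau> > 0" using m1 r unfolding \<tau>_def by simp
      define G where "G x = {a \<in> R1 A B x. real (sA A B x a) \<le> \<sigma> \<and> real (uB A B x a) \<le> \<tau>}" for x
      have fR1: "finite (R1 A B x)" for x using RR_fin[OF fA] unfolding R1_def by simp
      have fG: "finite (G x)" for x using fR1 unfolding G_def by simp
      have Glow: "real (card (G x)) \<ge> r / 4" if xX: "x \<in> X" for x
      proof -
        have rep: "real (rep A B x) \<ge> r" using xX unfolding X_def Xr_def by simp
        have cR: "real (card (RR A B x)) \<ge> r" using rep rep_eq[OF fA fB] by simp
        then have ne: "RR A B x \<noteq> {}" using r by auto
        have cR1: "real (card (R1 A B x)) = real (card (RR A B x)) - 1"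
          unfolding R1_def using ne RR_fin[OF fA]
          by (simp add: card_Diff_singleton Max_in of_nat_diff card_gt_0_iff Suc_le_eq)
        define bA where "bA = {a \<in> R1 A B x. \<sigma> < real (sA A B x a)}"
        define bB where "bB = {a \<in> R1 A B x. \<tau> < real (uB A B x a)}"
        have cbA: "real (card bA) \<le> r / 4"
          using bad_count[OF fR1 sumA_le[OF fA] sp] sp n1 r unfolding bA_def \<sigma>_def n_def[symmetric]
          by (simp add: field_simps)
        have cbB: "real (card bB) \<le> r / 4"
          using bad_count[OF fR1 sumB_le[OF fA fB] tp] tp m1 r unfolding bB_def \<tau>_def m_def[symmetric]
          by (simp add: field_simps)
        have Geq: "G x = R1 A B x - (bA \<union> bB)" unfolding G_def bA_def bB_def by auto
        have "R1 A B x \<subseteq> G x \<union> (bA \<union> bB)" unfolding Geq by blast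
        then have "card (R1 A B x) \<le> card (G x \<union> (bA \<union> bB))"
          by (rule card_mono[rotated]) (use fG in \<open>simp add: bA_def bB_def fR1\<close>)
        also have "\<dots> \<le> card (G x) + card (bA \<union> bB)" by (rule card_Un_le)
        finally have "card (R1 A B x) \<le> card (G x) + card (bA \<union> bB)" .
        moreover have "card (bA \<union> bB) \<le> card bA + card bB" by (rule card_Un_le)
        ultimately have "real (card (R1 A B x)) \<le> real (card (G x)) + real (card bA) + real (card bB)"
          by linarith
        then show ?thesis using cbA cbB cR1 cR r4 by linarith
      qed
      define \<Phi> where "\<Phi> = (\<lambda>(x, a). (x - a, uB A B x a, sA A B x a))"
      have inj: "inj_on \<Phi> (SIGMA x:X. G x)"
      proof (rule inj_onI)
        fix p q assume p: "p \<in> (SIGMA x:X. G x)" and q: "q \<in> (SIGMA x:X. G x)" and e: "\<Phi> p = \<Phi> q"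
        obtain x1 a1 where p': "p = (x1, a1)" "a1 \<in> R1 A B x1" using p unfolding G_def by auto
        obtain x2 a2 where q': "q = (x2, a2)" "a2 \<in> R1 A B x2" using q unfolding G_def by auto
        show "p = q" using inj_key[OF cA fB p'(2) q'(2)] e p' q' unfolding \<Phi>_def by simp
      qed
      have img: "\<Phi> ` (SIGMA x:X. G x) \<subseteq> B \<times> {1..nat \<lfloor>\<tau>\<rfloor>} \<times> {1..nat \<lfloor>\<sigma>\<rfloor>}"
      proof
        fix y assume "y \<in> \<Phi> ` (SIGMA x:X. G x)"
        then obtain x a where xa: "x \<in> X" "a \<in> G x" "y = \<Phi> (x, a)" by auto
        have aR: "a \<in> R1 A B x" using xa unfolding G_def by simp
        have "x - a \<in> B" using aR unfolding R1_def RR_def by simp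
        moreover have "uB A B x a \<le> nat \<lfloor>\<tau>\<rfloor>" using xa unfolding G_def
          by (simp add: le_nat_floor)
        moreover have "sA A B x a \<le> nat \<lfloor>\<sigma>\<rfloor>" using xa unfolding G_def
          by (simp add: le_nat_floor)
        ultimately show "y \<in> B \<times> {1..nat \<lfloor>\<tau>\<rfloor>} \<times> {1..nat \<lfloor>\<sigma>\<rfloor>}"
          using xa(3) uB_pos[OF fA fB aR] sA_pos[OF fA aR] unfolding \<Phi>_def by simp
      qed
      have "card (SIGMA x:X. G x) \<le> card (B \<times> {1..nat \<lfloor>\<tau>\<rfloor>} \<times> {1..nat \<lfloor>\<sigma>\<rfloor>})"
        by (rule card_inj_on_le[OF inj img]) (use fB in simp)
      then have "(\<Sum>x\<in>X. card (G x)) \<le> m * nat \<lfloor>\<tau>\<rfloor> * nat \<lfloor>\<sigma>\<rfloor>"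
        using fX fG unfolding m_def by (simp add: card_cartesian_product)
      then have s1: "(\<Sum>x\<in>X. real (card (G x))) \<le> real m * real (nat \<lfloor>\<tau>\<rfloor>) * real (nat \<lfloor>\<sigma>\<rfloor>)"
        by (metis of_nat_le_iff of_nat_mult of_nat_sum)
      have ft: "real (nat \<lfloor>\<tau>\<rfloor>) \<le> \<tau>" using tp by linarith
      have fs: "real (nat \<lfloor>\<sigma>\<rfloor>) \<le> \<sigma>" using sp by linarith
      have "real m * real (nat \<lfloor>\<tau>\<rfloor>) * real (nat \<lfloor>\<sigma>\<rfloor>) \<le> real m * \<tau> * \<sigma>"
        using ft fs tp sp by (intro mult_mono) auto
      moreover have "real (card X) * (r / 4) \<le> (\<Sum>x\<in>X. real (card (G x)))"
        using sum_mono[of X "\<lambda>_. r / 4" "\<lambda>x. real (card (G x))"] Glow by simp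
      ultimately have "real (card X) * (r / 4) \<le> real m * \<tau> * \<sigma>" using s1 by linarith
      then have "real (card X) * r \<le> 64 * real n * real m ^ 2 / r ^ 2"
        unfolding \<tau>_def \<sigma>_def using r by (simp add: field_simps power2_eq_square)
      then show ?thesis unfolding X_def[symmetric] n_def[symmetric] m_def[symmetric]
        using r by (simp add: field_simps power2_eq_square power3_eq_cube)
    qed
  qed
qed

theorem mainTheorem14:
  "\<exists>C>0. \<forall>(A::real set) (B::real set) (r::real).
      convex_set A \<and> finite B \<and> r \<ge> 1 \<longrightarrow>
      real (card (Xr A B r)) \<le> C * real (card A) * real (card B) ^ 2 / r ^ 3"
  by (rule exI[of _ 64]) (auto intro: main_bound)

end
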